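(* Let $m\ge 2$, let $\alpha_1,\dots,\alpha_{m-1}\in\mathbb{C}$, and let $A$ be the $m\times m$ matrix whose rows are indexed by $k=1,\dots,m$ and columns by $l=0,\dots,m-1$, with entries $$A_{k,l}=\sum_{j=0}^{m-1-l}\alpha_k^{\,j+l}F(-m+j)\quad (1\le k\le m-1),\qquad A_{m,l}=\sum_{j=l+1}^{m}(j-l)f(-j).$$ Write $V=\prod_{1\le i<j\le m-1}(\alpha_j-\alpha_i)$ and $e_k=\sum_{1\le j_1<\dots<j_k\le m-1}\alpha_{j_1}\cdots\alpha_{j_k}$ (with $e_0=1$). Then $$\det A=(-1)^{m-1}f(-m)^m\prod_{j=1}^{m-1}(\alpha_j-1)\,V.$$ Moreover, denoting by $M_{m,l+1}$ ($l=0,\dots,m-1$) the minor of $A$ obtained by deleting the last row and the column indexed by $l$, we have $M_{m,1}=f(-m)^{m-1}\,e_{m-1}\,V$ and, for $k=1,\dots,m-1$, $$M_{m,k+1}=f(-m)^{m-1}\,e_{m-1-k}\,V+\sum_{i=1}^{k}(-1)^{k-i}\frac{F(-m+k+1-i)}{f(-m)}M_{m,i}$$ (the latter formulas under the assumption $f(-m)\neq 0$).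
   Context: $X$ and $c\theta$ ($c>0$) are independent, non-negative, integer-valued random variables with $\mathbb{P}(c\theta\le m)=1$. For $j\in\mathbb{Z}$: $f(j)=\mathbb{P}(X-c\theta=j)$ and $F(j)=\mathbb{P}(X-c\theta\le j)$ (so $F(-m)=f(-m)$). *)

theory Defs
  imports "Jordan_Normal_Form.Determinant" "HOL-Probability.Probability_Mass_Function"
begin

text \<open>Distribution of X - c*theta, where X ~ p and c*theta ~ q are independent
  (independence is encoded by the product pmf).\<close>
definition diff_pmf :: "nat pmf \<Rightarrow> nat pmf \<Rightarrow> int pmf" where
  "diff_pmf p q = map_pmf (\<lambda>(x, y). int x - int y) (pair_pmf p q)"

definition fdiff :: "nat pmf \<Rightarrow> nat pmf \<Rightarrow> int \<Rightarrow> real" where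
  "fdiff p q j = pmf (diff_pmf p q) j"

definition Fdiff :: "nat pmf \<Rightarrow> nat pmf \<Rightarrow> int \<Rightarrow> real" where
  "Fdiff p q j = measure_pmf.prob (diff_pmf p q) {..j}"

definition vprod :: "(nat \<Rightarrow> complex) \<Rightarrow> nat \<Rightarrow> complex" where
  "vprod \<alpha> n = (\<Prod>(i, j) \<in> {(i, j). 1 \<le> i \<and> i < j \<and> j \<le> n}. \<alpha> j - \<alpha> i)"

definition esym :: "(nat \<Rightarrow> complex) \<Rightarrow> nat \<Rightarrow> nat \<Rightarrow> complex" where
  "esym \<alpha> n k = (\<Sum>S \<in> {S. S \<subseteq> {1..n} \<and> card S = k}. \<Prod>i\<in>S. \<alpha> i)"

text \<open>The matrix A: row index i = k - 1 (k = 1..m), column index l = 0..m-1.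
  f and F are given as complex-valued functions.\<close>
definition matA :: "nat \<Rightarrow> (nat \<Rightarrow> complex) \<Rightarrow> (int \<Rightarrow> complex) \<Rightarrow> (int \<Rightarrow> complex) \<Rightarrow> complex mat" where
  "matA m \<alpha> f F = Matrix.mat m m (\<lambda>(i, l).
     if i + 1 \<le> m - 1 then (\<Sum>j = 0..m - 1 - l. \<alpha> (i + 1) ^ (j + l) * F (- int m + int j))
     else (\<Sum>j = l + 1..m. of_nat (j - l) * f (- int j)))"

end

theory Submission
  imports Defs
begin

lemma prod_diag: "prod_list (diag_mat (A::complex mat)) = (\<Prod>i<dim_row A. A $$ (i,i))"
  by (simp add: diag_mat_def prod.distinct_set_conv_list[symmetric] lessThan_atLeast0)

lemma det_diag_left:
  fixes d :: "nat \<Rightarrow> complex"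
  assumes B: "B \<in> carrier_mat n n"
  shows "Determinant.det (Matrix.mat n n (\<lambda>(i,l). d i * B $$ (i,l))) = (\<Prod>i<n. d i) * Determinant.det B"
proof -
  let ?D = "Matrix.mat n n (\<lambda>(i,j). if i = j then d i else 0)"
  have eq: "Matrix.mat n n (\<lambda>(i,l). d i * B $$ (i,l)) = ?D * B"
  proof (rule eq_matI)
    fix i l assume i: "i < dim_row (?D * B)" and l: "l < dim_col (?D * B)"
    have "(?D * B) $$ (i,l) = (\<Sum>j<n. (if i = j then d i else 0) * B $$ (j,l))"
      using i l B by (auto simp: scalar_prod_def lessThan_atLeast0 intro!: sum.cong)
    also have "\<dots> = (\<Sum>j<n. if j = i then d i * B $$ (j,l) else 0)"
      by (rule sum.cong) auto
    also have "\<dots> = d i * B $$ (i,l)" using i by simp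
    finally show "Matrix.mat n n (\<lambda>(i,l). d i * B $$ (i,l)) $$ (i,l) = (?D * B) $$ (i,l)"
      using i l B by simp
  qed (use B in auto)
  have "Determinant.det ?D = prod_list (diag_mat ?D)"
    by (rule det_upper_triangular) (auto intro!: upper_triangularI)
  also have "\<dots> = (\<Prod>i<n. d i)"
    by (simp add: prod_diag)
  finally show ?thesis unfolding eq using det_mult[of ?D n B] B by simp
qed
definition vm :: "nat \<Rightarrow> (nat \<Rightarrow> complex) \<Rightarrow> complex mat" where
  "vm n x = Matrix.mat n n (\<lambda>(i,l). x i ^ l)"

lemma vm_carrier[simp]: "vm n x \<in> carrier_mat n n" by (simp add: vm_def)

lemma vm_step:
  "Determinant.det (vm (Suc n) (x(n:=y))) = Determinant.det (vm n x) * (\<Prod>i<n. y - x i)"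
proof -
  define N where "N = Suc n"
  define x' where "x' = x(n:=y)"
  define B where "B = vm N x'"
  define U where "U = Matrix.mat N N (\<lambda>(j,l). if j = l then 1 else if l = Suc j then -y else (0::complex))"
  have B: "B \<in> carrier_mat N N" by (simp add: B_def)
  have U: "U \<in> carrier_mat N N" by (simp add: U_def)
  have detU: "Determinant.det U = 1"
  proof -
    have "Determinant.det U = prod_list (diag_mat U)"
      by (rule det_upper_triangular[OF _ U]) (auto intro!: upper_triangularI simp: U_def)
    also have "\<dots> = 1" by (simp add: prod_diag U_def)
    finally show ?thesis .
  qed
  define C where "C = B * U"
  have C: "C \<in> carrier_mat N N" using B U by (simp add: C_def)
  have Cij: "C $$ (i,l) = (if l = 0 then 1 else (x' i - y) * x' i ^ (l - 1))" if i: "i < N" and l: "l < N" for i l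
  proof -
    have "C $$ (i,l) = (\<Sum>j<N. x' i ^ j * U $$ (j,l))"
      using i l B U by (auto simp: C_def B_def vm_def scalar_prod_def lessThan_atLeast0 intro!: sum.cong)
    also have "\<dots> = (\<Sum>j<N. (if j = l then x' i ^ j else 0) + (if l = Suc j then - y * x' i ^ j else 0))"
      using l by (intro sum.cong) (auto simp: U_def)
    also have "\<dots> = x' i ^ l + (\<Sum>j<N. if l = Suc j then - y * x' i ^ j else 0)"
      using l by (simp add: sum.distrib)
    also have "\<dots> = (if l = 0 then 1 else (x' i - y) * x' i ^ (l - 1))"
    proof (cases l)
      case 0 then show ?thesis by simp
    next
      case (Suc k)
      have "(\<Sum>j<N. if l = Suc j then - y * x' i ^ j else 0) = (\<Sum>j<N. if j = k then - y * x' i ^ j else 0)"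
        using Suc by (intro sum.cong) auto
      also have "\<dots> = - y * x' i ^ k" using Suc l by simp
      finally show ?thesis using Suc by (simp add: algebra_simps)
    qed
    finally show ?thesis .
  qed
  have "Determinant.det C = (\<Sum>l<N. C $$ (n,l) * cofactor C n l)"
    by (rule laplace_expansion_row[OF C]) (simp add: N_def)
  also have "\<dots> = (\<Sum>l<N. if l = 0 then cofactor C n l else 0)"
    by (intro sum.cong) (auto simp: Cij N_def x'_def)
  also have "\<dots> = cofactor C n 0" by (simp add: N_def)
  also have "\<dots> = (-1)^n * Determinant.det (mat_delete C n 0)" by (simp add: cofactor_def)
  also have "mat_delete C n 0 = Matrix.mat n n (\<lambda>(i,l). (x i - y) * vm n x $$ (i,l))"
  proof (rule eq_matI)
    fix i l assume "i < dim_row (Matrix.mat n n (\<lambda>(i,l). (x i - y) * vm n x $$ (i,l)))"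
      "l < dim_col (Matrix.mat n n (\<lambda>(i,l). (x i - y) * vm n x $$ (i,l)))"
    then have i: "i < n" and l: "l < n" by auto
    show "mat_delete C n 0 $$ (i, l) = Matrix.mat n n (\<lambda>(i,l). (x i - y) * vm n x $$ (i,l)) $$ (i, l)"
      using i l C by (simp add: mat_delete_def Cij N_def x'_def vm_def)
  qed (use C N_def in auto)
  also have "Determinant.det \<dots> = (\<Prod>i<n. x i - y) * Determinant.det (vm n x)"
    by (rule det_diag_left) simp
  finally have "Determinant.det C = (-1)^n * ((\<Prod>i<n. x i - y) * Determinant.det (vm n x))" .
  moreover have "(-1)^n * (\<Prod>i<n. x i - y) = (\<Prod>i<n. y - x i)"
  proof -
    have "(\<Prod>i<n. y - x i) = (\<Prod>i<n. (-1) * (x i - y))" by (intro prod.cong) auto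
    also have "\<dots> = (\<Prod>i<n. (-1::complex)) * (\<Prod>i<n. x i - y)" by (rule prod.distrib)
    also have "\<dots> = (-1)^n * (\<Prod>i<n. x i - y)" by simp
    finally show ?thesis by simp
  qed
  moreover have "Determinant.det C = Determinant.det B" unfolding C_def using det_mult[OF B U] detU by simp
  ultimately show ?thesis by (simp add: B_def N_def x'_def)
qed

lemma vm_det: "Determinant.det (vm n x) = (\<Prod>j<n. \<Prod>i<j. x j - x i)"
proof (induction n)
  case 0 then show ?case by (simp add: vm_def det_def')
next
  case (Suc n)
  have "Determinant.det (vm (Suc n) x) = Determinant.det (vm (Suc n) (x(n := x n)))" by simp
  also have "\<dots> = Determinant.det (vm n x) * (\<Prod>i<n. x n - x i)" by (rule vm_step)
  finally show ?case using Suc by simp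
qed

lemma vprod_Suc: "vprod \<alpha> (Suc n) = vprod \<alpha> n * (\<Prod>i\<in>{1..n}. \<alpha> (Suc n) - \<alpha> i)"
proof -
  let ?S = "\<lambda>n. {(i::nat, j). 1 \<le> i \<and> i < j \<and> j \<le> n}"
  have fin: "finite (?S n)" for n
  proof -
    have "?S n \<subseteq> {1..n} \<times> {1..n}" by auto
    then show ?thesis by (rule finite_subset) simp
  qed
  have eq: "?S (Suc n) = ?S n \<union> (\<lambda>i. (i, Suc n)) ` {1..n}" by auto
  have "vprod \<alpha> (Suc n) = (\<Prod>(i, j) \<in> ?S n \<union> (\<lambda>i. (i, Suc n)) ` {1..n}. \<alpha> j - \<alpha> i)"
    unfolding vprod_def eq ..
  also have "\<dots> = vprod \<alpha> n * (\<Prod>(i, j) \<in> (\<lambda>i. (i, Suc n)) ` {1..n}. \<alpha> j - \<alpha> i)"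
    unfolding vprod_def by (rule prod.union_disjoint[OF fin]) auto
  also have "(\<Prod>(i, j) \<in> (\<lambda>i. (i, Suc n)) ` {1..n}. \<alpha> j - \<alpha> i) = (\<Prod>i\<in>{1..n}. \<alpha> (Suc n) - \<alpha> i)"
    by (subst prod.reindex) (auto simp: inj_on_def)
  finally show ?thesis .
qed

lemma vprod_vm: "vprod \<alpha> n = Determinant.det (vm n (\<lambda>i. \<alpha> (Suc i)))"
proof (induction n)
  case 0
  have e: "{(i, j). 1 \<le> i \<and> i < j \<and> j \<le> (0::nat)} = {}" by auto
  show ?case unfolding vprod_def e by (simp add: vm_det)
next
  case (Suc n)
  have "(\<Prod>i\<in>{1..n}. \<alpha> (Suc n) - \<alpha> i) = (\<Prod>i\<in>Suc ` {..<n}. \<alpha> (Suc n) - \<alpha> i)"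
    by (simp add: image_Suc_lessThan)
  also have "\<dots> = (\<Prod>i<n. \<alpha> (Suc n) - \<alpha> (Suc i))" by (subst prod.reindex) auto
  finally have "(\<Prod>i\<in>{1..n}. \<alpha> (Suc n) - \<alpha> i) = (\<Prod>i<n. \<alpha> (Suc n) - \<alpha> (Suc i))" .
  then show ?case using Suc by (simp add: vprod_Suc vm_det)
qed

lemma vieta_set:
  fixes \<alpha> :: "nat \<Rightarrow> complex"
  assumes K: "finite K"
  shows "(\<Prod>j\<in>K. y - \<alpha> j) = (\<Sum>k\<le>card K. (-1)^k * (\<Sum>S\<in>{S. S \<subseteq> K \<and> card S = k}. \<Prod>i\<in>S. \<alpha> i) * y^(card K - k))"
proof -
  have "(\<Prod>j\<in>K. y - \<alpha> j) = (\<Prod>j\<in>K. (- \<alpha> j) + y)" by (simp add: algebra_simps)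
  also have "\<dots> = (\<Sum>X\<in>Pow K. (\<Prod>j\<in>X. - \<alpha> j) * (\<Prod>j\<in>K-X. y))" by (rule prod_add[OF K])
  also have "\<dots> = (\<Sum>X\<in>Pow K. (-1)^card X * (\<Prod>j\<in>X. \<alpha> j) * y^(card K - card X))"
  proof (rule sum.cong[OF refl])
    fix X assume "X \<in> Pow K"
    then have XK: "X \<subseteq> K" and fX: "finite X" using K finite_subset by auto
    have "(\<Prod>j\<in>X. - \<alpha> j) = (\<Prod>j\<in>X. (-1) * \<alpha> j)" by simp
    also have "\<dots> = (-1)^card X * (\<Prod>j\<in>X. \<alpha> j)" by (simp only: prod.distrib prod_constant)
    finally show "(\<Prod>j\<in>X. - \<alpha> j) * (\<Prod>j\<in>K-X. y) = (-1)^card X * (\<Prod>j\<in>X. \<alpha> j) * y^(card K - card X)"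
      using card_Diff_subset[OF fX XK] by simp
  qed
  also have "\<dots> = (\<Sum>k\<le>card K. \<Sum>X\<in>{X. X \<in> Pow K \<and> card X = k}. (-1)^card X * (\<Prod>j\<in>X. \<alpha> j) * y^(card K - card X))"
    by (rule sum.group[symmetric]) (auto simp: K card_mono)
  also have "\<dots> = (\<Sum>k\<le>card K. (-1)^k * (\<Sum>S\<in>{S. S \<subseteq> K \<and> card S = k}. \<Prod>i\<in>S. \<alpha> i) * y^(card K - k))"
    by (intro sum.cong refl) (auto simp: sum_distrib_left sum_distrib_right intro!: sum.cong)
  finally show ?thesis .
qed

lemma vieta:
  fixes \<alpha> :: "nat \<Rightarrow> complex"
  shows "(\<Prod>i<n. y - \<alpha> (Suc i)) = (\<Sum>s\<le>n. (-1)^(n-s) * esym \<alpha> n (n-s) * y^s)"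
proof -
  have "(\<Prod>j\<in>{1..n}. y - \<alpha> j) = (\<Prod>j\<in>Suc ` {..<n}. y - \<alpha> j)"
    by (simp add: image_Suc_lessThan)
  also have "\<dots> = (\<Prod>i<n. y - \<alpha> (Suc i))" by (subst prod.reindex) auto
  finally have "(\<Prod>i<n. y - \<alpha> (Suc i)) = (\<Prod>j\<in>{1..n}. y - \<alpha> j)" ..
  also have "\<dots> = (\<Sum>k\<le>n. (-1)^k * esym \<alpha> n k * y^(n - k))"
    by (simp add: vieta_set esym_def)
  also have "\<dots> = (\<Sum>s\<le>n. (-1)^(n-s) * esym \<alpha> n (n-s) * y^s)"
    by (rule sum.reindex_bij_witness[of _ "\<lambda>s. n - s" "\<lambda>s. n - s"]) auto
  finally show ?thesis .
qed

lemma sumL1: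
  fixes h :: "nat \<Rightarrow> complex"
  assumes "l < m"
  shows "(\<Sum>s<m. if l \<le> s then h s else 0) = (\<Sum>j=0..m-1-l. h (j+l))"
proof -
  have "(\<Sum>s<m. if l \<le> s then h s else 0) = (\<Sum>s\<in>{l..<m}. h s)"
    by (rule sum.mono_neutral_cong_right) auto
  also have "(\<Sum>s\<in>{l..<m}. h s) = (\<Sum>j=0..m-1-l. h (j+l))"
    using assms by (intro sum.reindex_bij_witness[of _ "\<lambda>j. j + l" "\<lambda>s. s - l"]) auto
  finally show ?thesis .
qed

lemma sumL2:
  fixes h :: "nat \<Rightarrow> complex"
  shows "(\<Sum>j=0..k. \<Sum>i\<le>j. h i) = (\<Sum>i\<le>k. of_nat (k+1-i) * h i)"
proof (induction k)
  case 0 then show ?case by simp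
next
  case (Suc k)
  have "(\<Sum>j=0..Suc k. \<Sum>i\<le>j. h i) = (\<Sum>i\<le>k. of_nat (k+1-i) * h i) + (\<Sum>i\<le>Suc k. h i)"
    using Suc by simp
  also have "\<dots> = (\<Sum>i\<le>k. of_nat (k+1-i) * h i + h i) + h (Suc k)"
    by (simp add: sum.distrib)
  also have "(\<Sum>i\<le>k. of_nat (k+1-i) * h i + h i) = (\<Sum>i\<le>k. of_nat (Suc k+1-i) * h i)"
    by (intro sum.cong refl) (auto simp: Suc_diff_le algebra_simps)
  finally show ?case by simp
qed

lemma sumL3:
  fixes f :: "int \<Rightarrow> complex"
  assumes "l < m"
  shows "(\<Sum>i\<le>m-1-l. of_nat (m-l-i) * f (- int m + int i)) = (\<Sum>j=l+1..m. of_nat (j-l) * f (- int j))"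
  using assms by (intro sum.reindex_bij_witness[of _ "\<lambda>j. m - j" "\<lambda>i. m - i"]) (auto simp: of_nat_diff)

lemma neg1_diff: "b \<le> a \<Longrightarrow> (-1::complex)^(a-b) = (-1)^a * (-1)^b"
proof -
  assume "b \<le> a"
  then have "(-1::complex)^a = (-1)^(a-b) * (-1)^b" by (simp add: power_add[symmetric])
  moreover have "(-1::complex)^b * (-1)^b = 1" by (simp add: power_add[symmetric])
  ultimately show ?thesis by (metis mult.assoc mult.right_neutral)
qed

lemma main_alg:
  fixes f F :: "int \<Rightarrow> complex" and m :: nat and \<alpha> :: "nat \<Rightarrow> complex"
  assumes m2: "m \<ge> 2"
    and hF: "\<And>j. F (- int m + int j) = (\<Sum>i\<le>j. f (- int m + int i))"
  defines "A \<equiv> matA m \<alpha> f F"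
    and "V \<equiv> vprod \<alpha> (m - 1)"
  shows "Determinant.det A = (-1) ^ (m - 1) * f (- int m) ^ m * (\<Prod>j = 1..m - 1. \<alpha> j - 1) * V
         \<and> (f (- int m) \<noteq> 0 \<longrightarrow>
           Determinant.det (mat_delete A (m - 1) 0) = f (- int m) ^ (m - 1) * esym \<alpha> (m - 1) (m - 1) * V
           \<and> (\<forall>k \<in> {1..m - 1}.
             Determinant.det (mat_delete A (m - 1) k) =
               f (- int m) ^ (m - 1) * esym \<alpha> (m - 1) (m - 1 - k) * V
               + (\<Sum>i = 1..k. (-1) ^ (k - i) * (F (- int m + int k + 1 - int i) / f (- int m))
                   * Determinant.det (mat_delete A (m - 1) (i - 1)))))"
proof -
  define n where "n = m - 1"
  have mn: "m = Suc n" using m2 by (simp add: n_def)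
  define G where "G j = F (- int m + int j)" for j
  define g0 where "g0 = f (- int m)"
  have G0: "G 0 = g0" using hF[of 0] by (simp add: G_def g0_def)
  define T where "T = Matrix.mat m m (\<lambda>(s,l). if l \<le> s then G (s-l) else 0)"
  have T: "T \<in> carrier_mat m m" by (simp add: T_def)
  have detT: "Determinant.det T = g0 ^ m"
  proof -
    have "Determinant.det T = prod_list (diag_mat T)"
      by (rule det_lower_triangular[OF _ T]) (auto simp: T_def)
    also have "\<dots> = g0 ^ m" by (simp add: prod_diag T_def G0)
    finally show ?thesis .
  qed
  define xy where "xy y = (\<lambda>i. \<alpha> (Suc i))(n := y)" for y
  define Ay where "Ay y = vm m (xy y) * T" for y
  have Ay: "Ay y \<in> carrier_mat m m" for y unfolding Ay_def using mult_carrier_mat[OF vm_carrier T] .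
  have Ay_raw: "Ay y $$ (i,l) = (\<Sum>s<m. xy y i ^ s * (if l \<le> s then G (s-l) else 0))"
    if "i < m" "l < m" for y i l
    using that by (auto simp: Ay_def vm_def T_def scalar_prod_def lessThan_atLeast0 intro!: sum.cong)
  have Ay_ent: "Ay y $$ (i,l) = (\<Sum>j=0..m-1-l. xy y i ^ (j+l) * G j)"
    if "i < m" "l < m" for y i l
  proof -
    have "Ay y $$ (i,l) = (\<Sum>s<m. if l \<le> s then xy y i ^ s * G (s-l) else 0)"
      using that by (simp add: Ay_raw if_distrib cong: if_cong)
    also have "\<dots> = (\<Sum>j=0..m-1-l. xy y i ^ (j+l) * G (j+l-l))" using that by (rule_tac sumL1) 
    finally show ?thesis by simp
  qed
  have A_eq: "A = Ay 1"
  proof (rule eq_matI)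
    fix i l assume "i < dim_row (Ay 1)" "l < dim_col (Ay 1)"
    then have i: "i < m" and l: "l < m" using carrier_matD[OF Ay[of 1]] by auto
    show "A $$ (i,l) = Ay 1 $$ (i,l)"
    proof (cases "i < n")
      case True
      then show ?thesis using i l by (simp add: A_def matA_def Ay_ent xy_def G_def n_def)
    next
      case False
      then have iN: "i = n" using i mn by simp
      have "Ay 1 $$ (i,l) = (\<Sum>j=0..m-1-l. G j)" using i l iN by (simp add: Ay_ent xy_def)
      also have "\<dots> = (\<Sum>j=0..m-1-l. \<Sum>i\<le>j. f (- int m + int i))" by (intro sum.cong refl) (simp only: G_def hF)
      also have "\<dots> = (\<Sum>i\<le>m-1-l. of_nat (m-1-l+1-i) * f (- int m + int i))" by (rule sumL2)
      also have "\<dots> = (\<Sum>i\<le>m-1-l. of_nat (m-l-i) * f (- int m + int i))"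
        using l by (intro sum.cong refl) (simp add: Suc_diff_Suc)
      also have "\<dots> = (\<Sum>j=l+1..m. of_nat (j-l) * f (- int j))" using l by (rule sumL3)
      finally show ?thesis using iN i l mn by (simp add: A_def matA_def)
    qed
  qed (use carrier_matD[OF Ay[of 1]] in \<open>auto simp: A_def matA_def\<close>)
  have detAy: "Determinant.det (Ay y) = V * (\<Prod>i<n. y - \<alpha> (Suc i)) * g0 ^ m" for y
  proof -
    have "Determinant.det (Ay y) = Determinant.det (vm m (xy y)) * g0 ^ m"
      unfolding Ay_def using det_mult[OF vm_carrier T] detT by simp
    also have "Determinant.det (vm m (xy y)) = V * (\<Prod>i<n. y - \<alpha> (Suc i))"
      unfolding mn xy_def vm_step V_def vprod_vm by simp
    finally show ?thesis .
  qed
  have part1: "Determinant.det A = (-1) ^ (m - 1) * f (- int m) ^ m * (\<Prod>j = 1..m - 1. \<alpha> j - 1) * V"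
  proof -
    have "(\<Prod>i<n. 1 - \<alpha> (Suc i)) = (\<Prod>i<n. (-1) * (\<alpha> (Suc i) - 1))" by simp
    also have "\<dots> = (\<Prod>i<n. (-1::complex)) * (\<Prod>i<n. \<alpha> (Suc i) - 1)" by (rule prod.distrib)
    also have "(\<Prod>i<n. \<alpha> (Suc i) - 1) = (\<Prod>j\<in>Suc ` {..<n}. \<alpha> j - 1)" by (subst prod.reindex) auto
    also have "Suc ` {..<n} = {1..n}" by (simp add: image_Suc_lessThan)
    finally have "(\<Prod>i<n. 1 - \<alpha> (Suc i)) = (-1)^n * (\<Prod>j=1..n. \<alpha> j - 1)" by simp
    then show ?thesis using detAy[of 1] A_eq by (simp add: n_def g0_def)
  qed
  define M where "M l = Determinant.det (mat_delete A n l)" for l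
  have del_eq: "mat_delete (Ay y) n l = mat_delete A n l" if l: "l < m" for y l
  proof (rule eq_matI)
    fix i j assume "i < dim_row (mat_delete A n l)" "j < dim_col (mat_delete A n l)"
    then have i: "i < n" and j: "j < n" using carrier_matD[OF Ay[of 1]] A_eq mn by auto
    define c where "c = (if j < l then j else Suc j)"
    have c: "c < m" using j mn by (simp add: c_def)
    have "mat_delete (Ay y) n l $$ (i,j) = Ay y $$ (i, c)"
      using carrier_matD[OF Ay[of y]] i j mn by (simp add: mat_delete_def c_def)
    also have "\<dots> = Ay 1 $$ (i, c)"
    proof -
      have im: "i < m" using i mn by simp
      have xe: "xy y i = xy 1 i" using i by (simp add: xy_def)
      show ?thesis by (simp only: Ay_ent[OF im c] xe)
    qed
    also have "\<dots> = mat_delete A n l $$ (i,j)"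
      using carrier_matD[OF Ay[of 1]] i j mn A_eq by (simp add: mat_delete_def c_def)
    finally show "mat_delete (Ay y) n l $$ (i,j) = mat_delete A n l $$ (i,j)" .
  qed (use carrier_matD[OF Ay[of 1]] carrier_matD[OF Ay[of y]] A_eq in auto)
  have lap: "Determinant.det (Ay y) = (\<Sum>l<m. Ay y $$ (n,l) * ((-1)^(n+l) * M l))" for y
  proof -
    have "Determinant.det (Ay y) = (\<Sum>l<m. Ay y $$ (n,l) * cofactor (Ay y) n l)"
      by (rule laplace_expansion_row[OF Ay]) (simp add: mn)
    also have "\<dots> = (\<Sum>l<m. Ay y $$ (n,l) * ((-1)^(n+l) * M l))"
      by (intro sum.cong refl) (simp add: cofactor_def del_eq M_def)
    finally show ?thesis .
  qed
  define t where "t s l = (if l \<le> s then G (s-l) else 0)" for s l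
  define c where "c l = (-1::complex)^(n+l) * M l" for l
  have coeffs: "(\<Sum>l<m. t s l * c l) = g0 ^ m * V * ((-1)^(n-s) * esym \<alpha> n (n-s))" if s: "s \<le> n" for s
  proof -
    have "\<forall>y. (\<Sum>s\<le>n. (\<Sum>l<m. t s l * c l) * y^s) = (\<Sum>s\<le>n. (g0 ^ m * V * ((-1)^(n-s) * esym \<alpha> n (n-s))) * y^s)"
    proof
      fix y :: complex
      have mset: "{..<m} = {..n}" using mn by auto
      have "(\<Sum>s\<le>n. (\<Sum>l<m. t s l * c l) * y^s) = (\<Sum>s\<le>n. \<Sum>l<m. y^s * t s l * c l)"
        unfolding sum_distrib_right by (intro sum.cong refl) (simp add: ac_simps)
      also have "\<dots> = (\<Sum>l<m. \<Sum>s\<le>n. y^s * t s l * c l)" by (rule sum.swap)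
      also have "\<dots> = (\<Sum>l<m. (\<Sum>s<m. y^s * t s l) * c l)"
        unfolding mset by (intro sum.cong refl) (simp add: sum_distrib_right)
      finally have "(\<Sum>s\<le>n. (\<Sum>l<m. t s l * c l) * y^s) = (\<Sum>l<m. (\<Sum>s<m. y^s * t s l) * c l)" .
      also have "\<dots> = (\<Sum>l<m. Ay y $$ (n,l) * c l)"
        by (intro sum.cong refl) (simp add: Ay_raw mn t_def xy_def)
      also have "\<dots> = Determinant.det (Ay y)" by (simp add: lap c_def)
      also have "\<dots> = g0 ^ m * V * (\<Sum>s\<le>n. (-1)^(n-s) * esym \<alpha> n (n-s) * y^s)"
        by (simp add: detAy vieta)
      also have "\<dots> = (\<Sum>s\<le>n. (g0 ^ m * V * ((-1)^(n-s) * esym \<alpha> n (n-s))) * y^s)"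
        by (simp add: sum_distrib_left mult_ac)
      finally show "(\<Sum>s\<le>n. (\<Sum>l<m. t s l * c l) * y^s) = (\<Sum>s\<le>n. (g0 ^ m * V * ((-1)^(n-s) * esym \<alpha> n (n-s))) * y^s)" .
    qed
    then show ?thesis using s by (simp only: polyfun_eq_coeffs)
  qed
  have split: "(\<Sum>l<m. t s l * c l) = (\<Sum>l<s. G (s-l) * c l) + g0 * c s" if s: "s \<le> n" for s
  proof -
    have "(\<Sum>l<m. t s l * c l) = (\<Sum>l<Suc s. t s l * c l)"
      using s mn by (intro sum.mono_neutral_right) (auto simp: t_def)
    also have "\<dots> = (\<Sum>l<s. G (s-l) * c l) + g0 * c s" by (simp add: t_def G0)
    finally show ?thesis .
  qed
  have part2: "Determinant.det (mat_delete A (m - 1) 0) = f (- int m) ^ (m - 1) * esym \<alpha> (m - 1) (m - 1) * V"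
    if g0: "g0 \<noteq> 0"
  proof -
    have "g0 * c 0 = g0 ^ m * V * ((-1)^n * esym \<alpha> n n)" using coeffs[of 0] split[of 0] by simp
    then have "g0 * ((-1)^n * M 0) = g0 * (g0 ^ n * V * ((-1)^n * esym \<alpha> n n))"
      by (simp add: c_def mn mult_ac)
    then have "(-1)^n * M 0 = (-1)^n * (g0 ^ n * esym \<alpha> n n * V)" using g0 by (simp add: mult_ac)
    then have "M 0 = g0 ^ n * esym \<alpha> n n * V" by simp
    then show ?thesis by (simp add: M_def n_def g0_def)
  qed
  have part3: "Determinant.det (mat_delete A (m - 1) k) =
               f (- int m) ^ (m - 1) * esym \<alpha> (m - 1) (m - 1 - k) * V
               + (\<Sum>i = 1..k. (-1) ^ (k - i) * (F (- int m + int k + 1 - int i) / f (- int m))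
                   * Determinant.det (mat_delete A (m - 1) (i - 1)))"
    if g0: "g0 \<noteq> 0" and k: "k \<in> {1..m-1}" for k
  proof -
    have kn: "k \<le> n" "1 \<le> k" using k by (auto simp: n_def)
    define \<sigma> where "\<sigma> = (-1::complex)^k"
    define \<nu> where "\<nu> = (-1::complex)^n"
    define e where "e = esym \<alpha> n (n-k)"
    have \<sigma>2: "\<sigma> * \<sigma> = 1" by (simp add: \<sigma>_def power_add[symmetric])
    have \<nu>2: "\<nu> * \<nu> = 1" by (simp add: \<nu>_def power_add[symmetric])
    define S where "S = (\<Sum>l<k. (-1)^l * G (k-l) * M l)"
    have H: "(\<Sum>l<k. G (k-l) * c l) + g0 * c k = g0 ^ m * V * ((-1)^(n-k) * e)"
      using coeffs[of k] split[of k] kn by (simp add: e_def)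
    have X: "(\<Sum>l<k. G (k-l) * c l) = \<nu> * S"
      unfolding S_def sum_distrib_left by (intro sum.cong refl) (simp add: c_def power_add \<nu>_def ac_simps)
    have ck: "c k = \<nu> * \<sigma> * M k" by (simp add: c_def \<sigma>_def \<nu>_def power_add)
    have nk: "(-1::complex)^(n-k) = \<nu> * \<sigma>" using kn by (simp add: neg1_diff \<sigma>_def \<nu>_def)
    have gm: "g0 ^ m = g0 * g0 ^ n" by (simp add: mn)
    have H2: "\<nu> * S + g0 * (\<nu> * \<sigma> * M k) = g0 * g0 ^ n * V * (\<nu> * \<sigma> * e)"
      using H unfolding X ck nk gm .
    have "\<nu>*\<sigma>*(\<nu> * S + g0 * (\<nu> * \<sigma> * M k)) = \<nu>*\<sigma>*(g0 * g0 ^ n * V * (\<nu> * \<sigma> * e))"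
      using H2 by simp
    moreover have "\<nu>*\<sigma>*(\<nu> * S + g0 * (\<nu> * \<sigma> * M k)) = (\<nu>*\<nu>)*(\<sigma>*S) + (\<nu>*\<nu>)*(\<sigma>*\<sigma>)*(g0*M k)"
      by (simp add: algebra_simps)
    moreover have "\<nu>*\<sigma>*(g0 * g0 ^ n * V * (\<nu> * \<sigma> * e)) = (\<nu>*\<nu>)*(\<sigma>*\<sigma>)*(g0 * (g0 ^ n * e * V))"
      by (simp add: algebra_simps)
    ultimately have "\<sigma>*S + g0*M k = g0 * (g0 ^ n * e * V)" unfolding \<sigma>2 \<nu>2 by simp
    then have E: "g0 * M k = g0 * (g0 ^ n * e * V) - \<sigma> * S"
      by (metis add_diff_cancel_left')
    have Mk: "M k = g0 ^ n * e * V - (\<sigma> / g0) * S"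
    proof -
      have "M k = (g0 * M k) / g0" using g0 by simp
      also have "\<dots> = (g0 * (g0 ^ n * e * V) - \<sigma> * S) / g0" by (simp only: E)
      also have "\<dots> = g0 ^ n * e * V - (\<sigma> / g0) * S" using g0 by (simp add: diff_divide_distrib)
      finally show ?thesis .
    qed
    have sumeq0: "(\<Sum>l<k. (-1) ^ (k - Suc l) * (G (k - l) / g0) * M l)
       = (\<Sum>i = 1..k. (-1) ^ (k - i) * (F (- int m + int k + 1 - int i) / g0) * M (i - 1))"
    proof (rule sum.reindex_bij_witness[of _ "\<lambda>i. i - 1" Suc])
      fix l assume l: "l \<in> {..<k}"
      then have "- int m + int k + 1 - int (Suc l) = - int m + int (k - l)" by auto
      then show "(-1) ^ (k - Suc l) * (F (- int m + int k + 1 - int (Suc l)) / g0) * M (Suc l - 1)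
             = (-1) ^ (k - Suc l) * (G (k - l) / g0) * M l" by (simp only: G_def diff_Suc_1)
    qed auto
    have sumeq: "(\<Sum>i = 1..k. (-1) ^ (k - i) * (F (- int m + int k + 1 - int i) / g0) * M (i - 1))
       = (\<Sum>l<k. (-1) ^ (k - Suc l) * (G (k - l) / g0) * M l)" using sumeq0 by simp
    also have "\<dots> = (\<Sum>l<k. - (\<sigma> / g0) * ((-1)^l * G (k-l) * M l))"
    proof (intro sum.cong refl)
      fix l assume "l \<in> {..<k}"
      then have "(-1::complex) ^ (k - Suc l) = \<sigma> * (-1)^Suc l" by (simp add: neg1_diff \<sigma>_def)
      then show "(-1) ^ (k - Suc l) * (G (k - l) / g0) * M l = - (\<sigma> / g0) * ((-1)^l * G (k-l) * M l)"
        using g0 by (simp only: power_Suc) (simp add: field_simps)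
    qed
    also have "\<dots> = - (\<sigma> / g0) * S" by (simp only: S_def sum_distrib_left)
    finally have sumeq': "(\<Sum>i = 1..k. (-1) ^ (k - i) * (F (- int m + int k + 1 - int i) / g0) * M (i - 1)) = - (\<sigma> / g0) * S" .
    show ?thesis using Mk sumeq' by (simp add: M_def n_def g0_def e_def)
  qed
  show ?thesis using part1 part2 part3 by (auto simp: g0_def n_def M_def)
qed


lemma prob_F:
  assumes q: "set_pmf q \<subseteq> {..m}"
  shows "complex_of_real (Fdiff p q (- int m + int j)) = (\<Sum>i\<le>j. complex_of_real (fdiff p q (- int m + int i)))"
proof -
  define D where "D = diff_pmf p q"
  have supp: "set_pmf D \<subseteq> {- int m..}"
    using q by (auto simp: D_def diff_pmf_def set_pair_pmf)
  have "Fdiff p q (- int m + int j) = measure_pmf.prob D ({..- int m + int j} \<inter> set_pmf D)"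
    by (simp add: Fdiff_def D_def measure_Int_set_pmf)
  also have "{..- int m + int j} \<inter> set_pmf D = {- int m..- int m + int j} \<inter> set_pmf D"
    using supp by auto
  also have "measure_pmf.prob D \<dots> = measure_pmf.prob D {- int m..- int m + int j}"
    by (simp add: measure_Int_set_pmf)
  also have "\<dots> = (\<Sum>x\<in>{- int m..- int m + int j}. pmf D x)"
    by (simp add: measure_measure_pmf_finite)
  also have "\<dots> = (\<Sum>i\<le>j. pmf D (- int m + int i))"
    by (rule sum.reindex_bij_witness[of _ "\<lambda>i. - int m + int i" "\<lambda>x. nat (x + int m)"]) auto
  finally show ?thesis by (simp add: fdiff_def D_def)
qed

theorem lemma3p2:
  fixes p q :: "nat pmf" and m :: nat and \<alpha> :: "nat \<Rightarrow> complex"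
  assumes "m \<ge> 2"
    and "set_pmf q \<subseteq> {..m}"
  defines "f \<equiv> (\<lambda>j. complex_of_real (fdiff p q j))"
    and "F \<equiv> (\<lambda>j. complex_of_real (Fdiff p q j))"
  defines "A \<equiv> matA m \<alpha> f F"
    and "V \<equiv> vprod \<alpha> (m - 1)"
  shows "Determinant.det A = (-1) ^ (m - 1) * f (- int m) ^ m * (\<Prod>j = 1..m - 1. \<alpha> j - 1) * V
         \<and> (f (- int m) \<noteq> 0 \<longrightarrow>
           Determinant.det (mat_delete A (m - 1) 0) = f (- int m) ^ (m - 1) * esym \<alpha> (m - 1) (m - 1) * V
           \<and> (\<forall>k \<in> {1..m - 1}.
             Determinant.det (mat_delete A (m - 1) k) =
               f (- int m) ^ (m - 1) * esym \<alpha> (m - 1) (m - 1 - k) * V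
               + (\<Sum>i = 1..k. (-1) ^ (k - i) * (F (- int m + int k + 1 - int i) / f (- int m))
                   * Determinant.det (mat_delete A (m - 1) (i - 1)))))"
proof -
  have hF: "\<And>j. F (- int m + int j) = (\<Sum>i\<le>j. f (- int m + int i))"
    unfolding F_def f_def by (rule prob_F[OF assms(2)])
  show ?thesis unfolding A_def V_def by (rule main_alg[OF assms(1) hF])
qed

end
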